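(* Let $(X,D,K)$ be a complete $b$-metric-like space with constant $K\ge1$. Assume that $S,T:X\to X$ are onto mappings such that $D(Tx,Sy)\geq R\,D(x,y)$ for all $x,y\in X$, where $R>K$ is a constant. Then $T$ and $S$ have a unique common fixed point.
   Context: A $b$-metric-like space $(X,D,K)$ is a set $X$ with a function $D:X\times X\to[0,\infty)$ and a constant $K\ge 1$ such that for all $x,y,z\in X$: (i) $D(x,y)=0\Rightarrow x=y$; (ii) $D(x,y)=D(y,x)$; (iii) $D(x,y)\le K[D(x,z)+D(z,y)]$. (Note $D(x,x)$ need not be $0$.) A sequence $\{x_n\}$ converges to $x$ if $\lim_{n\to\infty}D(x_n,x)=D(x,x)$. A sequence $\{x_n\}$ is Cauchy if $\lim_{n,m\to\infty}D(x_n,x_m)$ exists and is finite. The space is complete if every Cauchy sequence $\{x_n\}$ converges to some $x\in X$ with $\lim_{n,m\to\infty}D(x_n,x_m)=D(x,x)=\lim_{n\to\infty}D(x_n,x)$. *)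

theory Defs
  imports "HOL-Analysis.Analysis"
begin

definition b_metric_like :: "'a set \<Rightarrow> ('a \<Rightarrow> 'a \<Rightarrow> real) \<Rightarrow> real \<Rightarrow> bool" where
  "b_metric_like X D K \<longleftrightarrow> K \<ge> 1 \<and>
     (\<forall>x\<in>X. \<forall>y\<in>X. D x y \<ge> 0) \<and>
     (\<forall>x\<in>X. \<forall>y\<in>X. D x y = 0 \<longrightarrow> x = y) \<and>
     (\<forall>x\<in>X. \<forall>y\<in>X. D x y = D y x) \<and>
     (\<forall>x\<in>X. \<forall>y\<in>X. \<forall>z\<in>X. D x y \<le> K * (D x z + D z y))"

definition bml_converges :: "('a \<Rightarrow> 'a \<Rightarrow> real) \<Rightarrow> (nat \<Rightarrow> 'a) \<Rightarrow> 'a \<Rightarrow> bool" where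
  "bml_converges D s x \<longleftrightarrow> (\<lambda>n. D (s n) x) \<longlonglongrightarrow> D x x"

definition bml_double_lim :: "('a \<Rightarrow> 'a \<Rightarrow> real) \<Rightarrow> (nat \<Rightarrow> 'a) \<Rightarrow> real \<Rightarrow> bool" where
  "bml_double_lim D s L \<longleftrightarrow> ((\<lambda>(n, m). D (s n) (s m)) \<longlongrightarrow> L) (sequentially \<times>\<^sub>F sequentially)"

definition bml_cauchy :: "('a \<Rightarrow> 'a \<Rightarrow> real) \<Rightarrow> (nat \<Rightarrow> 'a) \<Rightarrow> bool" where
  "bml_cauchy D s \<longleftrightarrow> (\<exists>L. bml_double_lim D s L)"

definition bml_complete :: "'a set \<Rightarrow> ('a \<Rightarrow> 'a \<Rightarrow> real) \<Rightarrow> bool" where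
  "bml_complete X D \<longleftrightarrow> (\<forall>s. (\<forall>n. s n \<in> X) \<longrightarrow> bml_cauchy D s \<longrightarrow>
     (\<exists>x\<in>X. bml_double_lim D s (D x x) \<and> bml_converges D s x))"

end

theory Submission
  imports Defs
begin

theorem corollary2p2:
  fixes X :: "'a set" and D :: "'a \<Rightarrow> 'a \<Rightarrow> real" and K R :: real
    and S T :: "'a \<Rightarrow> 'a"
  assumes "X \<noteq> {}" and "b_metric_like X D K"
    and "bml_complete X D"
    and "\<forall>x\<in>X. S x \<in> X" and "\<forall>x\<in>X. T x \<in> X"
    and "S ` X = X" and "T ` X = X"
    and "R > K"
    and "\<forall>x\<in>X. \<forall>y\<in>X. D (T x) (S y) \<ge> R * D x y"
  shows "\<exists>!u. u \<in> X \<and> T u = u \<and> S u = u"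
proof -
  note bm = assms(2)[unfolded b_metric_like_def]
  have K1: "K \<ge> 1" using bm by auto
  have Dnn: "\<And>x y. x \<in> X \<Longrightarrow> y \<in> X \<Longrightarrow> D x y \<ge> 0" using bm by auto
  have D0: "\<And>x y. x \<in> X \<Longrightarrow> y \<in> X \<Longrightarrow> D x y = 0 \<Longrightarrow> x = y" using bm by auto
  have Dsym: "\<And>x y. x \<in> X \<Longrightarrow> y \<in> X \<Longrightarrow> D x y = D y x" using bm by auto
  have Dtri: "\<And>x y z. x \<in> X \<Longrightarrow> y \<in> X \<Longrightarrow> z \<in> X \<Longrightarrow> D x y \<le> K * (D x z + D z y)"
    using bm by auto
  have Rpos: "R > 0" using K1 assms(8) by linarith
  have exp: "\<And>x y. x \<in> X \<Longrightarrow> y \<in> X \<Longrightarrow> R * D x y \<le> D (T x) (S y)" using assms(9) by auto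
  have uniq: "\<And>u v. u \<in> X \<Longrightarrow> v \<in> X \<Longrightarrow> T u = u \<Longrightarrow> S v = v \<Longrightarrow> u = v"
  proof -
    fix u v assume u: "u \<in> X" and v: "v \<in> X" and "T u = u" "S v = v"
    then have "R * D u v \<le> D u v" using exp[OF u v] by simp
    moreover have "D u v \<ge> 0" using Dnn u v by auto
    ultimately have "D u v = 0"
    proof -
      assume a: "R * D u v \<le> D u v" "D u v \<ge> 0"
      show "D u v = 0"
      proof (rule ccontr)
        assume "D u v \<noteq> 0"
        then have p: "D u v > 0" using a by auto
        have "1 * D u v < R * D u v" using assms(8) K1 p by (intro mult_strict_right_mono) auto
        then show False using a by simp
      qed
    qed
    then show "u = v" using D0 u v by auto
  qed
  define F where "F = inv_into X T"
  define G where "G = inv_into X S"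
  have FX: "\<And>y. y \<in> X \<Longrightarrow> F y \<in> X" and TF: "\<And>y. y \<in> X \<Longrightarrow> T (F y) = y"
    unfolding F_def using assms(7) by (metis inv_into_into, metis f_inv_into_f)
  have GX: "\<And>y. y \<in> X \<Longrightarrow> G y \<in> X" and SG: "\<And>y. y \<in> X \<Longrightarrow> S (G y) = y"
    unfolding G_def using assms(6) by (metis inv_into_into, metis f_inv_into_f)
  define h where "h = 1 / R"
  have hpos: "h > 0" and hK: "K * h < 1" using Rpos assms(8) by (auto simp: h_def field_simps)
  have h1: "h < 1"
  proof -
    have "1 * h \<le> K * h" using K1 hpos by (intro mult_right_mono) auto
    then show ?thesis using hK by simp
  qed
  have contr: "\<And>a b. a \<in> X \<Longrightarrow> b \<in> X \<Longrightarrow> D (F a) (G b) \<le> h * D a b"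
  proof -
    fix a b assume a: "a \<in> X" and b: "b \<in> X"
    have "R * D (F a) (G b) \<le> D a b" using exp[OF FX[OF a] GX[OF b]] TF[OF a] SG[OF b] by simp
    then show "D (F a) (G b) \<le> h * D a b" using Rpos by (simp add: h_def field_simps)
  qed
  obtain x0 where x0: "x0 \<in> X" using assms(1) by auto
  define s where "s = rec_nat x0 (\<lambda>n y. if even n then F y else G y)"
  have s0: "s 0 = x0" and sS: "\<And>n. s (Suc n) = (if even n then F (s n) else G (s n))"
    by (simp_all add: s_def)
  have sX: "\<And>n. s n \<in> X"
  proof -
    fix n show "s n \<in> X" by (induction n) (auto simp: s0 sS x0 FX GX)
  qed
  define d0 where "d0 = D (s 0) (s 1)"
  have step: "\<And>n. D (s n) (s (Suc n)) \<le> d0 * h ^ n"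
  proof -
    fix n show "D (s n) (s (Suc n)) \<le> d0 * h ^ n"
    proof (induction n)
      case 0 then show ?case by (simp add: d0_def)
    next
      case (Suc n)
      have "D (s (Suc n)) (s (Suc (Suc n))) \<le> h * D (s n) (s (Suc n))"
      proof (cases "even n")
        case True
        then have "D (s (Suc n)) (s (Suc (Suc n))) = D (F (s n)) (G (s (Suc n)))"
          using sS by simp
        also have "\<dots> \<le> h * D (s n) (s (Suc n))" using contr sX by blast
        finally show ?thesis .
      next
        case False
        then have "D (s (Suc n)) (s (Suc (Suc n))) = D (F (s (Suc n))) (G (s n))"
          using sS Dsym FX GX sX by simp
        also have "\<dots> \<le> h * D (s (Suc n)) (s n)" using contr sX by blast
        also have "\<dots> = h * D (s n) (s (Suc n))" using Dsym sX by simp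
        finally show ?thesis .
      qed
      also have "\<dots> \<le> h * (d0 * h ^ n)" using Suc hpos by (simp add: mult_left_mono)
      finally show ?case by (simp add: algebra_simps)
    qed
  qed
  have d0nn: "d0 \<ge> 0" using Dnn sX by (simp add: d0_def)
  define C where "C = 2 * K * d0 / (1 - K * h)"
  have bound: "\<And>n p. D (s n) (s (n + p)) \<le> C * h ^ n"
  proof -
    fix n p show "D (s n) (s (n + p)) \<le> C * h ^ n"
    proof (induction p arbitrary: n)
      case 0
      have "D (s n) (s n) \<le> K * (D (s n) (s (Suc n)) + D (s (Suc n)) (s n))" using Dtri sX by blast
      also have "\<dots> = 2 * K * D (s n) (s (Suc n))" using Dsym sX by simp
      also have "\<dots> \<le> 2 * K * (d0 * h ^ n)" using step K1 by (simp add: mult_left_mono)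
      also have "\<dots> \<le> C * h ^ n"
      proof -
        have "2 * K * d0 * h ^ n \<ge> 0" using K1 d0nn hpos by simp
        moreover have "0 < 1 - K * h" "1 - K * h \<le> 1" using hK K1 hpos by auto
        ultimately have "2 * K * d0 * h ^ n * (1 - K*h) \<le> 2 * K * d0 * h ^ n"
          by (simp add: mult_left_le)
        then show ?thesis using \<open>0 < 1 - K * h\<close> by (simp add: C_def field_simps)
      qed
      finally show ?case by simp
    next
      case (Suc p)
      have "D (s n) (s (n + Suc p)) \<le> K * (D (s n) (s (Suc n)) + D (s (Suc n)) (s (Suc n + p)))"
        using Dtri sX by (simp)
      also have "\<dots> \<le> K * (d0 * h ^ n + C * h ^ Suc n)"
        using step[of n] Suc[of "Suc n"] K1 by (intro mult_left_mono) auto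
      also have "\<dots> \<le> C * h ^ n"
      proof -
        have "0 < 1 - K * h" using hK by auto
        then have cc: "C * (1 - K * h) = 2 * K * d0" by (simp add: C_def)
        have nn: "K * d0 * h ^ n \<ge> 0" using K1 d0nn hpos by simp
        have "C * h ^ n - K * (d0 * h ^ n + C * h ^ Suc n) = (C * (1 - K * h)) * h ^ n - K * d0 * h ^ n"
          by (simp add: algebra_simps)
        also have "\<dots> = K * d0 * h ^ n" using cc by simp
        finally show ?thesis using nn by linarith
      qed
      finally show ?case .
    qed
  qed
  have bound2: "\<And>n m. \<bar>D (s n) (s m)\<bar> \<le> C * h ^ min n m"
  proof -
    fix n m
    show "\<bar>D (s n) (s m)\<bar> \<le> C * h ^ min n m"
    proof (cases "n \<le> m")
      case True
      then obtain p where "m = n + p" using le_Suc_ex by blast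
      then show ?thesis using bound[of n p] Dnn sX True by (simp add: min_def)
    next
      case False
      then obtain p where "n = m + p" using le_Suc_ex[of m n] by auto
      then show ?thesis using bound[of m p] Dnn sX Dsym False by (simp add: min_def)
    qed
  qed
  have Cnn: "C \<ge> 0" using d0nn K1 hK by (simp add: C_def)
  have hlim: "(\<lambda>n. C * h ^ n) \<longlonglongrightarrow> 0"
    using hpos h1 by (intro tendsto_mult_right_zero LIMSEQ_power_zero) auto
  have dl: "bml_double_lim D s 0"
    unfolding bml_double_lim_def
  proof (rule tendstoI)
    fix e :: real assume e: "e > 0"
    from hlim e obtain N where N: "\<And>n. n \<ge> N \<Longrightarrow> \<bar>C * h ^ n\<bar> < e"
      unfolding LIMSEQ_def dist_real_def by auto
    show "\<forall>\<^sub>F x in sequentially \<times>\<^sub>F sequentially. dist ((\<lambda>(n, m). D (s n) (s m)) x) 0 < e"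
      unfolding eventually_prod_sequentially
    proof (intro exI allI impI)
      fix m n assume "m \<ge> N" "n \<ge> N"
      then have "\<bar>C * h ^ min n m\<bar> < e" using N by auto
      then show "dist ((\<lambda>(n, m). D (s n) (s m)) (n, m)) 0 < e"
        using bound2[of n m] by (simp add: dist_real_def)
    qed
  qed
  then obtain x where xX: "x \<in> X" and dlx: "bml_double_lim D s (D x x)" and cx: "bml_converges D s x"
    using assms(3) sX unfolding bml_complete_def bml_cauchy_def by blast
  have "D x x = 0"
    using dlx dl unfolding bml_double_lim_def
    by (rule tendsto_unique[rotated]) (simp add: prod_filter_eq_bot)
  then have conv: "(\<lambda>n. D (s n) x) \<longlonglongrightarrow> 0" using cx by (simp add: bml_converges_def)
  have smono1: "strict_mono (\<lambda>k::nat. 2 * k)" by (rule strict_monoI) auto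
  have smono2: "strict_mono (\<lambda>k::nat. 2 * k + 1)" by (rule strict_monoI) auto
  have smono3: "strict_mono (\<lambda>k::nat. 2 * k + 2)" by (rule strict_monoI) auto
  have ce: "(\<lambda>k. D (s (2*k)) x) \<longlonglongrightarrow> 0"
    using LIMSEQ_subseq_LIMSEQ[OF conv smono1] by (simp add: o_def)
  have co: "(\<lambda>k. D (s (2*k+1)) x) \<longlonglongrightarrow> 0"
    using LIMSEQ_subseq_LIMSEQ[OF conv smono2] by (simp add: o_def)
  have ce2: "(\<lambda>k. D (s (2*k+2)) x) \<longlonglongrightarrow> 0"
    using LIMSEQ_subseq_LIMSEQ[OF conv smono3] by (simp add: o_def)
  obtain y where yX: "y \<in> X" and xy: "x = S y" using assms(6) xX by blast
  have Sx: "S x = x"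
  proof -
    have b: "D x y \<le> K * (D (s (2*k+1)) x + D (s (2*k)) x / R)" for k
    proof -
      have e: "s (2*k+1) = F (s (2*k))" using sS by simp
      have "R * D (s (2*k+1)) y \<le> D (s (2*k)) x"
        using exp[OF sX yX] TF[OF sX] e xy by metis
      then have r: "D (s (2*k+1)) y \<le> D (s (2*k)) x / R" using Rpos by (simp add: field_simps)
      have "D x y \<le> K * (D x (s (2*k+1)) + D (s (2*k+1)) y)" using Dtri xX yX sX by blast
      also have "\<dots> \<le> K * (D (s (2*k+1)) x + D (s (2*k)) x / R)"
        using r K1 Dsym xX sX by (intro mult_left_mono) auto
      finally show ?thesis .
    qed
    have lim: "(\<lambda>k. K * (D (s (2*k+1)) x + D (s (2*k)) x / R)) \<longlonglongrightarrow> K * (0 + 0 / R)"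
      by (intro tendsto_intros co ce) (use Rpos in auto)
    have "D x y \<le> K * (0 + 0 / R)" 
      using lim b by (intro LIMSEQ_le_const[OF lim]) auto
    then have "D x y \<le> 0" by simp
    then have "x = y" using D0 Dnn xX yX by force
    then show ?thesis using xy by simp
  qed
  obtain z where zX: "z \<in> X" and xz: "x = T z" using assms(7) xX by blast
  have Tx: "T x = x"
  proof -
    have b: "D z x \<le> K * (D (s (2*k+1)) x / R + D (s (2*k+2)) x)" for k
    proof -
      have e: "s (2*k+2) = G (s (2*k+1))" using sS[of "2*k+1"] by simp
      have "R * D z (s (2*k+2)) \<le> D x (s (2*k+1))"
        using exp[OF zX sX] SG[OF sX] e xz by metis
      then have r: "D z (s (2*k+2)) \<le> D (s (2*k+1)) x / R"
        using Rpos Dsym xX sX by (simp add: field_simps)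
      have "D z x \<le> K * (D z (s (2*k+2)) + D (s (2*k+2)) x)" using Dtri xX zX sX by blast
      also have "\<dots> \<le> K * (D (s (2*k+1)) x / R + D (s (2*k+2)) x)"
        using r K1 by (intro mult_left_mono) auto
      finally show ?thesis .
    qed
    have lim: "(\<lambda>k. K * (D (s (2*k+1)) x / R + D (s (2*k+2)) x)) \<longlonglongrightarrow> K * (0 / R + 0)"
      by (intro tendsto_intros co ce2) (use Rpos in auto)
    have "D z x \<le> K * (0 / R + 0)" 
      using lim b by (intro LIMSEQ_le_const[OF lim]) auto
    then have "D z x \<le> 0" by simp
    then have "z = x" using D0 Dnn xX zX by force
    then show ?thesis using xz by simp
  qed
  show ?thesis
    using xX Tx Sx uniq by blast
qed

end
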